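(* The multidegree of $H_3\subset G(1,4)$ with respect to the $3$-dimensional Schubert cycles is $(\alpha,\beta)=(1,2)$: a general Schubert variety $\Omega(0,4)$ meets $H_3$ in exactly $1$ point and a general Schubert variety $\Omega(1,3)$ meets $H_3$ in exactly $2$ points; equivalently $[H_3]=1\cdot[\Omega(0,4)]+2\cdot[\Omega(1,3)]$ in $H^6(G(1,4),\mathbb{Z})$.
   Context: Binary quartics up to scalar form $\mathbb{P}^4$; $G(1,4)$ is the Grassmannian of lines in $\mathbb{P}^4$; $H(f)=f_{xx}f_{yy}-f_{xy}^2$ is the Hessian of a quartic $f$; $H_3=\overline{\{\langle f,H(f)\rangle\in G(1,4): f \text{ has four simple roots}\}}$. $\Omega(0,4)$ is the Schubert variety of lines through a fixed point of $\mathbb{P}^4$, and $\Omega(1,3)$ is the Schubert variety of lines meeting a fixed line $\ell$ and contained in a fixed $\mathbb{P}^3\supset\ell$; both have dimension $3$ and degrees $1$ and $2$ respectively in the Plücker embedding. *)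

theory Defs
  imports Complex_Main
begin

text \<open>Binary forms over the complex numbers are represented by coefficient functions:
  a form of degree d is c :: nat \<Rightarrow> complex, meaning the sum over i \<le> d of
  c i * x^(d-i) * y^i, with c i = 0 for i > d.  Binary quartics (= affine cone over P^4)
  are the coefficient functions supported in {0..4}.\<close>

type_synonym bform = "nat \<Rightarrow> complex"

definition quartics :: "bform set" where
  "quartics = {c. \<forall>i>4. c i = 0}"

definition dX :: "nat \<Rightarrow> bform \<Rightarrow> bform" where
  "dX d c = (\<lambda>i. of_nat (d - i) * c i)"   \<comment> \<open>d/dx of a form of degree d\<close>

definition dY :: "bform \<Rightarrow> bform" where
  "dY c = (\<lambda>i. of_nat (Suc i) * c (Suc i))"

definition fmul :: "bform \<Rightarrow> bform \<Rightarrow> bform" where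
  "fmul c e = (\<lambda>k. \<Sum>i\<le>k. c i * e (k - i))"

definition hess :: "bform \<Rightarrow> bform" where
  "hess f = (\<lambda>k. fmul (dX 3 (dX 4 f)) (dY (dY f)) k
               - fmul (dY (dX 4 f)) (dY (dX 4 f)) k)"

text \<open>The linear form q x - p y, vanishing exactly at the point [p:q] of P^1.\<close>
definition linf :: "complex \<Rightarrow> complex \<Rightarrow> bform" where
  "linf p q = (\<lambda>i. if i = 0 then q else if i = 1 then - p else 0)"

definition four_simple_roots :: "bform \<Rightarrow> bool" where
  "four_simple_roots f \<longleftrightarrow>
     (\<exists>p q :: nat \<Rightarrow> complex. \<exists>a. a \<noteq> 0 \<and>
        (\<forall>j<4. p j \<noteq> 0 \<or> q j \<noteq> 0) \<and>
        (\<forall>j<4. \<forall>k<4. j \<noteq> k \<longrightarrow> p j * q k \<noteq> p k * q j) \<and>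
        f = (\<lambda>i. a * fmul (fmul (fmul (linf (p 0) (q 0)) (linf (p 1) (q 1)))
                                   (linf (p 2) (q 2))) (linf (p 3) (q 3)) i))"

definition lspan :: "bform list \<Rightarrow> bform set" where
  "lspan vs = {(\<lambda>i. \<Sum>k<length vs. c k * (vs ! k) i) | c. True}"

definition lindep_free :: "bform list \<Rightarrow> bool" where
  "lindep_free vs \<longleftrightarrow>
     (\<forall>c. (\<lambda>i. \<Sum>k<length vs. c k * (vs ! k) i) = (\<lambda>i. 0) \<longrightarrow> (\<forall>k<length vs. c k = 0))"

text \<open>G(1,4): lines of P^4 = 2-dimensional linear subspaces of the space of quartics.\<close>
definition line_basis :: "bform set \<Rightarrow> bform \<Rightarrow> bform \<Rightarrow> bool" where
  "line_basis L f g \<longleftrightarrow> f \<in> quartics \<and> g \<in> quartics \<and> lindep_free [f, g] \<and> L = lspan [f, g]"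

definition G14 :: "bform set set" where
  "G14 = {L. \<exists>f g. line_basis L f g}"

inductive_set polyfun :: "(('v \<Rightarrow> complex) \<Rightarrow> complex) set" where
  pconst: "(\<lambda>x. c) \<in> polyfun"
| pvar: "(\<lambda>x. x v) \<in> polyfun"
| padd: "F \<in> polyfun \<Longrightarrow> G \<in> polyfun \<Longrightarrow> (\<lambda>x. F x + G x) \<in> polyfun"
| pmul: "F \<in> polyfun \<Longrightarrow> G \<in> polyfun \<Longrightarrow> (\<lambda>x. F x * G x) \<in> polyfun"

definition pluecker :: "bform \<Rightarrow> bform \<Rightarrow> (nat \<times> nat \<Rightarrow> complex)" where
  "pluecker f g = (\<lambda>(i, j). f i * g j - f j * g i)"

text \<open>Zariski closure in G(1,4) (Pluecker embedding) of a set S of lines.\<close>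
definition zclosure :: "bform set set \<Rightarrow> bform set set" where
  "zclosure S = {L \<in> G14. \<forall>F \<in> polyfun.
      (\<forall>M \<in> S. \<forall>f g. line_basis M f g \<longrightarrow> F (pluecker f g) = 0) \<longrightarrow>
      (\<forall>f g. line_basis L f g \<longrightarrow> F (pluecker f g) = 0)}"

definition H3 :: "bform set set" where
  "H3 = zclosure {lspan [f, hess f] | f. f \<in> quartics \<and> four_simple_roots f}"

definition Omega04 :: "bform \<Rightarrow> bform set set" where
  "Omega04 p = {L \<in> G14. p \<in> L}"

definition Omega13 :: "bform \<Rightarrow> bform \<Rightarrow> bform \<Rightarrow> bform \<Rightarrow> bform set set" where
  "Omega13 u0 u1 u2 u3 = {L \<in> G14. L \<subseteq> lspan [u0, u1, u2, u3] \<and>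
                                    (\<exists>v \<in> L \<inter> lspan [u0, u1]. v \<noteq> (\<lambda>i. 0))}"

definition frame_vec :: "(nat \<times> nat \<Rightarrow> complex) \<Rightarrow> nat \<Rightarrow> bform" where
  "frame_vec u j = (\<lambda>i. u (j, i))"

end

theory Submission
  imports Defs "HOL-Computational_Algebra.Polynomial" "HOL-Computational_Algebra.Fundamental_Theorem_Algebra"
begin


lemma pf_const: "(\<lambda>x. c) \<in> polyfun" by (rule polyfun.pconst)
lemma pf_var: "(\<lambda>x. x v) \<in> polyfun" by (rule polyfun.pvar)
lemma pf_add: "F \<in> polyfun \<Longrightarrow> G \<in> polyfun \<Longrightarrow> (\<lambda>x. F x + G x) \<in> polyfun" by (rule polyfun.padd)
lemma pf_mult: "F \<in> polyfun \<Longrightarrow> G \<in> polyfun \<Longrightarrow> (\<lambda>x. F x * G x) \<in> polyfun" by (rule polyfun.pmul)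
lemma pf_uminus: "F \<in> polyfun \<Longrightarrow> (\<lambda>x. - F x) \<in> polyfun"
  using pf_mult[OF pf_const[of "-1"]] by simp
lemma pf_diff: "F \<in> polyfun \<Longrightarrow> G \<in> polyfun \<Longrightarrow> (\<lambda>x. F x - G x) \<in> polyfun"
  using pf_add[OF _ pf_uminus] by simp
lemma pf_sum: "finite A \<Longrightarrow> (\<And>a. a \<in> A \<Longrightarrow> (\<lambda>x. F a x) \<in> polyfun) \<Longrightarrow> (\<lambda>x. \<Sum>a\<in>A. F a x) \<in> polyfun"
proof (induction A rule: finite_induct)
  case empty then show ?case by (simp add: pf_const)
next
  case (insert a A) then show ?case by (simp add: pf_add)
qed
lemma pf_comp: "F \<in> polyfun \<Longrightarrow> (\<And>v. (\<lambda>x. A x v) \<in> polyfun) \<Longrightarrow> (\<lambda>x. F (A x)) \<in> polyfun"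
proof (induction F rule: polyfun.induct)
  case (pconst c) then show ?case by (simp add: pf_const)
next
  case (pvar v) then show ?case by simp
next
  case (padd F G) then show ?case by (simp add: pf_add)
next
  case (pmul F G) then show ?case by (simp add: pf_mult)
qed

lemmas pf_intros = pf_const pf_var pf_add pf_mult pf_diff pf_uminus

lemma pf_hess: "(\<And>i. (\<lambda>x. A x i) \<in> polyfun) \<Longrightarrow> (\<lambda>x. hess (A x) k) \<in> polyfun"
  unfolding hess_def fmul_def dX_def dY_def
  by (intro pf_diff pf_sum pf_mult pf_const; simp)

definition hq :: "bform \<Rightarrow> bform" where
  "hq c = (\<lambda>k. if k = 0 then 24*c 0*c 2 - 9*c 1*c 1
     else if k = 1 then 72*c 0*c 3 - 12*c 1*c 2
     else if k = 2 then 144*c 0*c 4 + 18*c 1*c 3 - 12*c 2*c 2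
     else if k = 3 then 72*c 1*c 4 - 12*c 2*c 3
     else if k = 4 then 24*c 2*c 4 - 9*c 3*c 3 else 0)"

lemma quarticsD: "c \<in> quartics \<Longrightarrow> 4 < i \<Longrightarrow> c i = 0"
  by (simp add: quartics_def)

lemma hess_hq: assumes "c \<in> quartics" shows "hess c = hq c"
proof
  fix k
  have z: "\<And>i. 4 < i \<Longrightarrow> c i = 0" using assms by (simp add: quartics_def)
  show "hess c k = hq c k"
  proof (cases "k \<le> 4")
    case True
    then have "k = 0 \<or> k = 1 \<or> k = 2 \<or> k = 3 \<or> k = 4" by auto
    then show ?thesis
      by (elim disjE; simp add: hess_def hq_def fmul_def dX_def dY_def z numeral_eq_Suc atMost_Suc algebra_simps)
  next
    case False
    have 1: "fmul (dX 3 (dX 4 c)) (dY (dY c)) k = 0"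
      unfolding fmul_def
    proof (rule sum.neutral, intro ballI)
      fix i assume "i \<in> {..k}"
      show "dX 3 (dX 4 c) i * dY (dY c) (k - i) = 0"
      proof (cases "i \<le> 2")
        case True then have "4 < Suc (Suc (k - i))" using False by auto
        then show ?thesis by (simp add: dY_def z)
      next
        case False then show ?thesis by (simp add: dX_def)
      qed
    qed
    have 2: "fmul (dY (dX 4 c)) (dY (dX 4 c)) k = 0"
      unfolding fmul_def
    proof (rule sum.neutral, intro ballI)
      fix i assume "i \<in> {..k}"
      show "dY (dX 4 c) i * dY (dX 4 c) (k - i) = 0"
      proof (cases "i \<le> 2")
        case True then have "3 \<le> k - i" using False by auto
        then show ?thesis by (simp add: dY_def dX_def)
      next
        case False then show ?thesis by (simp add: dX_def dY_def)
      qed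
    qed
    show ?thesis using 1 2 False by (simp add: hess_def hq_def)
  qed
qed



definition II :: "bform \<Rightarrow> complex" where
  "II f = 1728 * f 0 * f 4 - 432 * f 1 * f 3 + 144 * f 2 * f 2"
definition JJ :: "bform \<Rightarrow> complex" where
  "JJ f = 124416 * f 0 * f 2 * f 4 - 46656 * f 0 * f 3 * f 3 - 46656 * f 1 * f 1 * f 4
          + 15552 * f 1 * f 2 * f 3 - 3456 * f 2 * f 2 * f 2"

lemma k5cases: "(k::nat) \<le> 4 \<Longrightarrow> k = 0 \<or> k = 1 \<or> k = 2 \<or> k = 3 \<or> k = 4" by auto

lemma hq_pencil: assumes "f \<in> quartics"
  shows "hq (\<lambda>i. a * f i + b * hq f i) k =
     (2*a*b*II f + b*b*JJ f) * f k + (a*a - b*b*II f) * hq f k"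
proof (cases "k \<le> 4")
  case True
  then show ?thesis
    by (elim k5cases[elim_format] disjE; simp add: hq_def II_def JJ_def; simp add: algebra_simps)
next
  case False then show ?thesis using assms by (simp add: hq_def quartics_def)
qed

lemma hq_quad: "hq (\<lambda>i. a * v i + b * w i) k =
   a*a*hq v k + a*b*(hq (\<lambda>i. v i + w i) k - hq v k - hq w k) + b*b*hq w k"
  by (simp add: hq_def; simp add: algebra_simps)

lemma hq_scale: "hq (\<lambda>i. c * v i) k = c*c*hq v k"
  by (simp add: hq_def; simp add: algebra_simps)

lemma hq_quartic: "hq f \<in> quartics" by (simp add: hq_def quartics_def)

lemma hess_quartic: "f \<in> quartics \<Longrightarrow> hess f \<in> quartics" by (simp add: hess_hq hq_quartic)

lemma lin_quartic: "f \<in> quartics \<Longrightarrow> g \<in> quartics \<Longrightarrow> (\<lambda>i. a * f i + b * g i) \<in> quartics"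
  by (simp add: quartics_def)

lemma lspan2: "h \<in> lspan [f, g] \<longleftrightarrow> (\<exists>a b. h = (\<lambda>i. a * f i + b * g i))"
proof
  assume "h \<in> lspan [f, g]"
  then have "\<exists>c. h = (\<lambda>i. \<Sum>k<length [f,g]. c k * ([f, g] ! k) i)" unfolding lspan_def by blast
  then obtain c where "h = (\<lambda>i. \<Sum>k<length [f,g]. c k * ([f, g] ! k) i)" by blast
  then have "h = (\<lambda>i. c 0 * f i + c 1 * g i)" by (simp add: numeral_eq_Suc lessThan_Suc add.commute)
  then show "\<exists>a b. h = (\<lambda>i. a * f i + b * g i)" by blast
next
  assume "\<exists>a b. h = (\<lambda>i. a * f i + b * g i)"
  then obtain a b where h: "h = (\<lambda>i. a * f i + b * g i)" by blast
  define c where "c = (\<lambda>k::nat. if k = 0 then a else b)"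
  have "h = (\<lambda>i. \<Sum>k<length [f,g]. c k * ([f, g] ! k) i)"
    by (simp add: h c_def numeral_eq_Suc lessThan_Suc add.commute)
  then show "h \<in> lspan [f, g]" by (auto simp: lspan_def)
qed

lemma lspan4: "h \<in> lspan [u0, u1, u2, u3] \<longleftrightarrow>
   (\<exists>a b c d. h = (\<lambda>i. a * u0 i + b * u1 i + c * u2 i + d * u3 i))"
proof
  assume "h \<in> lspan [u0, u1, u2, u3]"
  then have "\<exists>c. h = (\<lambda>i. \<Sum>k<length [u0, u1, u2, u3]. c k * ([u0, u1, u2, u3] ! k) i)" unfolding lspan_def by blast
  then obtain c where "h = (\<lambda>i. \<Sum>k<length [u0, u1, u2, u3]. c k * ([u0, u1, u2, u3] ! k) i)" by blast
  then have "h = (\<lambda>i. c 0 * u0 i + c 1 * u1 i + c 2 * u2 i + c 3 * u3 i)"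
    by (simp add: numeral_eq_Suc lessThan_Suc algebra_simps)
  then show "\<exists>a b c d. h = (\<lambda>i. a * u0 i + b * u1 i + c * u2 i + d * u3 i)" by blast
next
  assume "\<exists>a b c d. h = (\<lambda>i. a * u0 i + b * u1 i + c * u2 i + d * u3 i)"
  then obtain a b c d where h: "h = (\<lambda>i. a * u0 i + b * u1 i + c * u2 i + d * u3 i)" by blast
  define e where "e = (\<lambda>k::nat. if k = 0 then a else if k = 1 then b else if k = 2 then c else d)"
  have "h = (\<lambda>i. \<Sum>k<length [u0, u1, u2, u3]. e k * ([u0, u1, u2, u3] ! k) i)"
    by (simp add: h e_def numeral_eq_Suc lessThan_Suc algebra_simps)
  then show "h \<in> lspan [u0, u1, u2, u3]" by (auto simp: lspan_def)
qed

lemma lindep2: "lindep_free [f, g] \<longleftrightarrow>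
   (\<forall>a b. (\<lambda>i. a * f i + b * g i) = (\<lambda>i. 0) \<longrightarrow> a = 0 \<and> b = 0)"
proof
  assume L: "lindep_free [f, g]"
  show "\<forall>a b. (\<lambda>i. a * f i + b * g i) = (\<lambda>i. 0) \<longrightarrow> a = 0 \<and> b = 0"
  proof (intro allI impI)
    fix a b assume z: "(\<lambda>i. a * f i + b * g i) = (\<lambda>i. 0)"
    define c where "c = (\<lambda>k::nat. if k = 0 then a else b)"
    have "(\<lambda>i. \<Sum>k<length [f,g]. c k * ([f, g] ! k) i) = (\<lambda>i. 0)"
      using z by (simp add: c_def numeral_eq_Suc lessThan_Suc fun_eq_iff algebra_simps)
    then have "\<forall>k<2. c k = 0" using L unfolding lindep_free_def by simp
    then have "c 0 = 0" "c 1 = 0" by auto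
    then show "a = 0 \<and> b = 0" unfolding c_def by auto
  qed
next
  assume R: "\<forall>a b. (\<lambda>i. a * f i + b * g i) = (\<lambda>i. 0) \<longrightarrow> a = 0 \<and> b = 0"
  show "lindep_free [f, g]" unfolding lindep_free_def
  proof (intro allI impI)
    fix c k assume "(\<lambda>i. \<Sum>k<length [f, g]. c k * ([f, g] ! k) i) = (\<lambda>i. 0)" and kk: "k < length [f,g]"
    then have "(\<lambda>i. c 0 * f i + c 1 * g i) = (\<lambda>i. 0)" by (simp add: numeral_eq_Suc lessThan_Suc add.commute)
    then have "c 0 = 0 \<and> c 1 = 0" using R by blast
    then show "c k = 0" using kk by (auto simp: less_Suc_eq)
  qed
qed

lemma pencil_closed:
  assumes f: "f \<in> quartics" and h: "h \<in> lspan [f, hess f]"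
  shows "hess h \<in> lspan [f, hess f]"
proof -
  obtain a b where hh: "h = (\<lambda>i. a * f i + b * hess f i)" using h lspan2 by blast
  have hq: "h \<in> quartics" using hh lin_quartic f hess_quartic by simp
  have "hess h = hq h" by (rule hess_hq[OF hq])
  also have "\<dots> = (\<lambda>k. (2*a*b*II f + b*b*JJ f) * f k + (a*a - b*b*II f) * hess f k)"
    unfolding hh hess_hq[OF f] using hq_pencil[OF f, of a b] by (intro ext) simp
  finally have "hess h = (\<lambda>k. (2*a*b*II f + b*b*JJ f) * f k + (a*a - b*b*II f) * hess f k)" .
  then show ?thesis using lspan2 by blast
qed



definition Wd :: "bform \<Rightarrow> (nat \<times> nat \<Rightarrow> complex) \<Rightarrow> nat \<Rightarrow> nat \<Rightarrow> nat \<Rightarrow> complex" where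
  "Wd h P i j k = h i * P (j, k) - h j * P (i, k) + h k * P (i, j)"

definition Gp :: "nat \<Rightarrow> nat \<Rightarrow> nat \<Rightarrow> nat \<Rightarrow> nat \<Rightarrow> (nat \<times> nat \<Rightarrow> complex) \<Rightarrow> complex" where
  "Gp m n i j k = (\<lambda>P. Wd (hess (\<lambda>l. P (m, l) + P (n, l))) P i j k)"

definition Sset :: "bform set set" where
  "Sset = {lspan [f, hess f] | f. f \<in> quartics \<and> four_simple_roots f}"

lemma H3_Sset: "H3 = zclosure Sset" by (simp add: H3_def Sset_def)

lemma indep_pl: assumes "lindep_free [f, g]" shows "\<exists>j k. pluecker f g (j, k) \<noteq> 0"
proof (rule ccontr)
  assume "\<not> ?thesis"
  then have z: "\<And>j k. f j * g k = f k * g j" by (auto simp: pluecker_def)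
  have R: "\<And>a b. (\<lambda>i. a * f i + b * g i) = (\<lambda>i. 0) \<Longrightarrow> a = 0 \<and> b = 0"
    using assms lindep2 by blast
  show False
  proof (cases "f = (\<lambda>i. 0)")
    case True
    then have "(\<lambda>i. 1 * f i + 0 * g i) = (\<lambda>i. 0)" by simp
    then show False using R[of 1 0] by simp
  next
    case False
    then obtain j where fj: "f j \<noteq> 0" by auto
    have "(\<lambda>i. g j * f i + (- f j) * g i) = (\<lambda>i. 0)"
      using z by (auto simp: fun_eq_iff algebra_simps)
    then show False using R[of "g j" "- f j"] fj by simp
  qed
qed

lemma minor_indep: assumes "f i * g j - f j * g i \<noteq> 0" shows "lindep_free [f, g]"
proof -
  have "a = 0 \<and> b = 0" if z: "(\<lambda>l. a * f l + b * g l) = (\<lambda>l. 0)" for a b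
  proof -
    have 1: "a * f i + b * g i = 0" "a * f j + b * g j = 0" using z by (auto simp: fun_eq_iff)
    have "a * (f i * g j - f j * g i) = (a * f i + b * g i) * g j - (a * f j + b * g j) * g i"
      by (simp add: algebra_simps)
    then have "a * (f i * g j - f j * g i) = 0" using 1 by simp
    moreover have "b * (f i * g j - f j * g i) = (a * f j + b * g j) * f i - (a * f i + b * g i) * f j"
      by (simp add: algebra_simps)
    then have "b * (f i * g j - f j * g i) = 0" using 1 by simp
    ultimately show ?thesis using assms by simp
  qed
  then show ?thesis using lindep2 by blast
qed

lemma Wd_in_span: assumes "h \<in> lspan [f, g]" shows "Wd h (pluecker f g) i j k = 0"
proof -
  obtain a b where "h = (\<lambda>i. a * f i + b * g i)" using assms lspan2 by blast
  then show ?thesis by (simp add: Wd_def pluecker_def algebra_simps)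
qed

lemma span_of_Wd:
  assumes P: "pluecker f g (j, k) \<noteq> 0" and W: "\<And>i. Wd h (pluecker f g) i j k = 0"
  shows "h \<in> lspan [f, g]"
proof -
  define D where "D = pluecker f g (j, k)"
  have D: "D = f j * g k - f k * g j" by (simp add: D_def pluecker_def)
  have "h i = ((h j * g k - h k * g j) / D) * f i + ((h k * f j - h j * f k) / D) * g i" for i
  proof -
    have "h i * D = h j * (f i * g k - f k * g i) - h k * (f i * g j - f j * g i)"
      using W[of i] by (simp add: Wd_def pluecker_def D algebra_simps)
    then have e: "h i * D = f i * (h j * g k - h k * g j) + g i * (h k * f j - h j * f k)"
      by (simp add: algebra_simps)
    have D0: "D \<noteq> 0" using P D_def by simp
    have "h i = (h i * D) / D" using D0 by simp
    also have "\<dots> = (f i * (h j * g k - h k * g j) + g i * (h k * f j - h j * f k)) / D" using e by simp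
    also have "\<dots> = ((h j * g k - h k * g j) / D) * f i + ((h k * f j - h j * f k) / D) * g i"
      by (simp add: add_divide_distrib[symmetric] algebra_simps)
    finally show ?thesis .
  qed
  then show ?thesis unfolding lspan2 by blast
qed

lemma pf_Gp: "Gp m n i j k \<in> polyfun"
proof -
  have h: "(\<lambda>P. hess (\<lambda>l. P (m, l) + P (n, l)) q) \<in> polyfun" for q
    by (rule pf_hess) (rule pf_add[OF pf_var pf_var])
  show ?thesis unfolding Gp_def Wd_def
    by (rule pf_add pf_diff pf_mult h pf_var)+
qed

lemma lspan2_lin: "v \<in> lspan [f, g] \<Longrightarrow> w \<in> lspan [f, g] \<Longrightarrow> (\<lambda>i. a * v i + b * w i) \<in> lspan [f, g]"
proof -
  assume "v \<in> lspan [f, g]" "w \<in> lspan [f, g]"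
  then obtain a1 b1 a2 b2 where "v = (\<lambda>i. a1 * f i + b1 * g i)" "w = (\<lambda>i. a2 * f i + b2 * g i)"
    unfolding lspan2 by blast
  then have "(\<lambda>i. a * v i + b * w i) = (\<lambda>i. (a*a1 + b*a2) * f i + (a*b1+b*b2) * g i)"
    by (simp add: fun_eq_iff algebra_simps)
  then show ?thesis unfolding lspan2 by blast
qed

lemma Gp_vanish_S:
  assumes "M \<in> Sset" "line_basis M f g"
  shows "Gp m n i j k (pluecker f g) = 0"
proof -
  obtain f0 where f0: "f0 \<in> quartics" "M = lspan [f0, hess f0]" using assms(1) by (auto simp: Sset_def)
  have Mfg: "M = lspan [f, g]" using assms(2) by (simp add: line_basis_def)
  define w where "w = (\<lambda>l. pluecker f g (m, l) + pluecker f g (n, l))"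
  have "w = (\<lambda>l. (- (g m + g n)) * f l + (f m + f n) * g l)"
    by (simp add: w_def pluecker_def fun_eq_iff algebra_simps)
  then have "w \<in> lspan [f, g]" unfolding lspan2 by blast
  then have "w \<in> lspan [f0, hess f0]" using Mfg f0 by simp
  then have "hess w \<in> lspan [f0, hess f0]" by (rule pencil_closed[OF f0(1)])
  then have "hess w \<in> M" using f0 by simp
  then have "hess w \<in> lspan [f, g]" using Mfg by simp
  then show ?thesis unfolding Gp_def using Wd_in_span w_def by simp
qed

lemma lemmaA:
  assumes L: "L \<in> H3" and B: "line_basis L f g" and h: "h \<in> L"
  shows "hess h \<in> L"
proof -
  have fq: "f \<in> quartics" and gq: "g \<in> quartics" and ind: "lindep_free [f, g]" and Lfg: "L = lspan [f, g]"
    using B by (auto simp: line_basis_def)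
  define P where "P = pluecker f g"
  have G0: "Gp m n i j k P = 0" for m n i j k
  proof -
    have "L \<in> zclosure Sset" using L H3_Sset by simp
    then have "\<forall>F\<in>polyfun. (\<forall>M\<in>Sset. \<forall>f g. line_basis M f g \<longrightarrow> F (pluecker f g) = 0) \<longrightarrow>
      (\<forall>f g. line_basis L f g \<longrightarrow> F (pluecker f g) = 0)" by (simp add: zclosure_def)
    then show ?thesis using pf_Gp[of m n i j k] Gp_vanish_S B P_def by blast
  qed
  obtain j k where jk: "P (j, k) \<noteq> 0" using indep_pl[OF ind] P_def by blast
  define vm where "vm m = (\<lambda>l. P (m, l))" for m
  have vmq: "vm m \<in> quartics" for m using fq gq by (simp add: vm_def P_def pluecker_def quartics_def)
  have wq: "(\<lambda>l. vm m l + vm n l) \<in> quartics" for m n using vmq by (simp add: quartics_def)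
  have hw: "hq (\<lambda>l. vm m l + vm n l) \<in> lspan [f, g]" for m n
  proof -
    have "hess (\<lambda>l. vm m l + vm n l) \<in> lspan [f, g]"
      apply (rule span_of_Wd[of f g j k])
      using jk G0 by (auto simp: P_def vm_def Gp_def)
    then show ?thesis using hess_hq[OF wq] by simp
  qed
  have hv: "hq (vm m) \<in> lspan [f, g]" for m
  proof -
    have "hq (\<lambda>l. vm m l + vm m l) = (\<lambda>l. 4 * hq (vm m) l)"
      using hq_scale[of 2 "vm m"] by (simp add: fun_eq_iff mult_2[symmetric])
    then have "(\<lambda>l. 4 * hq (vm m) l) \<in> lspan [f, g]" using hw[of m m] by simp
    then have "(\<lambda>i. (1/4) * (4 * hq (vm m) i) + 0 * (4 * hq (vm m) i)) \<in> lspan [f, g]"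
      using lspan2_lin by blast
    then show ?thesis by simp
  qed
  obtain a b where hab: "h = (\<lambda>i. a * f i + b * g i)" using h Lfg lspan2 by blast
  define D where "D = P (j, k)"
  define al where "al = (a * f k + b * g k) / D"
  define be where "be = - (a * f j + b * g j) / D"
  have hvm: "h = (\<lambda>i. al * vm j i + be * vm k i)"
  proof
    fix i
    have D0: "D \<noteq> 0" using jk D_def by simp
    have Dal: "D * al = a * f k + b * g k" using D0 by (simp add: al_def)
    have Dbe: "D * be = - (a * f j + b * g j)" using D0 by (simp add: be_def)
    have "D * (al * vm j i + be * vm k i) = (D*al) * vm j i + (D*be) * vm k i" by (simp add: algebra_simps)
    also have "\<dots> = D * (a * f i + b * g i)" unfolding Dal Dbe
      by (simp add: vm_def P_def pluecker_def D_def algebra_simps)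
    finally have "al * vm j i + be * vm k i = a * f i + b * g i" using D0 by simp
    then show "h i = al * vm j i + be * vm k i" using hab by simp
  qed
  have hq': "h \<in> quartics" using hab lin_quartic fq gq by simp
  have "hess h = hq h" by (rule hess_hq[OF hq'])
  also have "\<dots> = (\<lambda>i. al*al*hq (vm j) i + al*be*(hq (\<lambda>i. vm j i + vm k i) i - hq (vm j) i - hq (vm k) i) + be*be*hq (vm k) i)"
    unfolding hvm by (simp add: hq_quad fun_eq_iff)
  also have "\<dots> \<in> lspan [f, g]"
  proof -
    have 1: "(\<lambda>i. hq (\<lambda>i. vm j i + vm k i) i - hq (vm j) i - hq (vm k) i) \<in> lspan [f, g]"
    proof -
      have "(\<lambda>i. 1 * hq (\<lambda>i. vm j i + vm k i) i + (-1) * hq (vm j) i) \<in> lspan [f, g]"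
        using lspan2_lin hw hv by blast
      then have "(\<lambda>i. 1 * (1 * hq (\<lambda>i. vm j i + vm k i) i + (-1) * hq (vm j) i) + (-1) * hq (vm k) i) \<in> lspan [f, g]"
        using lspan2_lin hv by blast
      then show ?thesis by simp
    qed
    have "(\<lambda>i. (al*al) * hq (vm j) i + (al*be) * (hq (\<lambda>i. vm j i + vm k i) i - hq (vm j) i - hq (vm k) i)) \<in> lspan [f, g]"
      using lspan2_lin[OF hv 1] by blast
    then have "(\<lambda>i. 1 * ((al*al) * hq (vm j) i + (al*be) * (hq (\<lambda>i. vm j i + vm k i) i - hq (vm j) i - hq (vm k) i)) + (be*be) * hq (vm k) i) \<in> lspan [f, g]"
      using lspan2_lin hv by blast
    then show ?thesis by (simp add: mult.assoc)
  qed
  finally show ?thesis using Lfg by simp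
qed



definition Phi :: "(nat \<Rightarrow> complex) \<Rightarrow> bform" where
  "Phi x = (\<lambda>i. x 0 * fmul (fmul (fmul (linf (x 1) (x 5)) (linf (x 2) (x 6))) (linf (x 3) (x 7))) (linf (x 4) (x 8)) i)"

lemma linf_coeff: "linf p q = coeff [:q, -p:]"
proof
  fix i show "linf p q i = coeff [:q, - p:] i"
    by (cases i; cases "i - 1") (auto simp: linf_def coeff_pCons split: nat.splits)
qed

lemma fmul_coeff: "fmul (coeff A) (coeff B) = coeff (A * B)"
  by (simp add: fmul_def coeff_mult fun_eq_iff)

lemma Phi_poly: "Phi x = coeff (smult (x 0) ([:x 5, -x 1:] * [:x 6, -x 2:] * [:x 7, -x 3:] * [:x 8, -x 4:]))"
  unfolding Phi_def linf_coeff fmul_coeff by (rule ext) (simp only: coeff_smult)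

lemma Phi_quartic: "Phi x \<in> quartics"
proof -
  let ?A = "smult (x 0) ([:x 5, -x 1:] * [:x 6, -x 2:] * [:x 7, -x 3:] * [:x 8, -x 4:])"
  have d1: "degree [:a, b:] \<le> 1" for a b :: complex by (simp add: degree_pCons_le)
  have "degree ([:x 5, -x 1:] * [:x 6, -x 2:]) \<le> 2"
    using order.trans[OF degree_mult_le add_mono[OF d1 d1]] by simp
  then have "degree ([:x 5, -x 1:] * [:x 6, -x 2:] * [:x 7, -x 3:]) \<le> 3"
    using order.trans[OF degree_mult_le add_mono[OF _ d1]] by fastforce
  then have "degree ([:x 5, -x 1:] * [:x 6, -x 2:] * [:x 7, -x 3:] * [:x 8, -x 4:]) \<le> 4"
    using order.trans[OF degree_mult_le add_mono[OF _ d1]] by fastforce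
  then have "degree ?A \<le> 4" using degree_smult_le order.trans by blast
  then show ?thesis unfolding Phi_poly quartics_def by (auto intro: coeff_eq_0)
qed

lemma pf_linf: "(\<lambda>x. linf (x a) (x b) i) \<in> polyfun"
  unfolding linf_def by (cases "i = 0"; cases "i = 1") (auto intro: pf_intros)

lemma pf_fmul: "(\<And>i. (\<lambda>x. A x i) \<in> polyfun) \<Longrightarrow> (\<And>i. (\<lambda>x. B x i) \<in> polyfun) \<Longrightarrow> (\<lambda>x. fmul (A x) (B x) k) \<in> polyfun"
  unfolding fmul_def by (intro pf_sum pf_mult) auto

lemma pf_Phi: "(\<lambda>x. Phi x i) \<in> polyfun"
  unfolding Phi_def
  by (intro pf_mult pf_var pf_fmul pf_linf)

lemma factor_quartic:
  assumes fq: "f \<in> quartics" and fz: "f \<noteq> (\<lambda>i. 0)"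
  shows "\<exists>x. Phi x = f"
proof -
  define P where "P = Poly [f 0, f 1, f 2, f 3, f 4]"
  have cP: "coeff P i = f i" for i
  proof (cases "i \<le> 4")
    case True
    then have "i = 0 \<or> i = 1 \<or> i = 2 \<or> i = 3 \<or> i = 4" by auto
    then show ?thesis by (auto simp: P_def numeral_eq_Suc)
  next
    case False then have "coeff P i = 0" unfolding P_def coeff_Poly_eq nth_default_def by simp
    then show ?thesis using fq False by (simp add: quartics_def)
  qed
  have fP: "f = coeff P" using cP by (simp add: fun_eq_iff)
  have dP: "degree P \<le> 4" using cP fq by (intro degree_le) (simp add: quartics_def)
  obtain root where R: "smult (lead_coeff P) (\<Prod>i<degree P. [:-root i, 1:]) = P"
    using complex_poly_decompose' by blast
  define d where "d = degree P"
  define L where "L j = (if j < d then [:-root j, 1:] else 1)" for j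
  have "(\<Prod>j<4. L j) = (\<Prod>j\<in>{..<4} \<inter> {j. j < d}. [:-root j, 1:])"
    unfolding L_def by (simp add: prod.If_cases)
  also have "{..<4} \<inter> {j. j < d} = {..<d}" using dP d_def by auto
  finally have Lprod: "(\<Prod>j<4. L j) = (\<Prod>j<d. [:-root j, 1:])" .
  define x where "x n = (if n = 0 then lead_coeff P
     else if n \<le> 4 then (if n - 1 < d then -1 else 0)
     else if n - 5 < d then - root (n - 5) else 1)" for n
  have Lx: "[:x (j + 5), - x (j + 1):] = L j" if "j < 4" for j
    using that by (auto simp: x_def L_def one_pCons)
  have "Phi x = coeff (smult (lead_coeff P) (L 0 * L 1 * L 2 * L 3))"
    unfolding Phi_poly using Lx[of 0] Lx[of 1] Lx[of 2] Lx[of 3] by (simp add: x_def)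
  also have "L 0 * L 1 * L 2 * L 3 = (\<Prod>j<4. L j)"
    by (simp add: numeral_eq_Suc lessThan_Suc mult_ac)
  finally show ?thesis using Lprod R fP d_def by metis
qed


lemma pf_line: "G \<in> polyfun \<Longrightarrow> \<exists>p. \<forall>t. G (\<lambda>v. x0 v + t * (x1 v - x0 v)) = poly p t"
proof (induction G rule: polyfun.induct)
  case (pconst c) then show ?case by (intro exI[of _ "[:c:]"]) simp
next
  case (pvar v) then show ?case by (intro exI[of _ "[:x0 v, x1 v - x0 v:]"]) (simp add: algebra_simps)
next
  case (padd F G)
  then obtain p q where "\<forall>t. F (\<lambda>v. x0 v + t * (x1 v - x0 v)) = poly p t" "\<forall>t. G (\<lambda>v. x0 v + t * (x1 v - x0 v)) = poly q t" by blast
  then show ?case by (intro exI[of _ "p + q"]) simp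
next
  case (pmul F G)
  then obtain p q where "\<forall>t. F (\<lambda>v. x0 v + t * (x1 v - x0 v)) = poly p t" "\<forall>t. G (\<lambda>v. x0 v + t * (x1 v - x0 v)) = poly q t" by blast
  then show ?case by (intro exI[of _ "p * q"]) simp
qed

lemma density:
  fixes G B :: "('v \<Rightarrow> complex) \<Rightarrow> complex"
  assumes G: "G \<in> polyfun" and B: "B \<in> polyfun" and GB: "\<And>x. B x \<noteq> 0 \<Longrightarrow> G x = 0"
    and B1: "B x1 \<noteq> 0"
  shows "G x0 = 0"
proof -
  obtain p where p: "\<forall>t. G (\<lambda>v. x0 v + t * (x1 v - x0 v)) = poly p t" using pf_line[OF G] by blast
  obtain q where q: "\<forall>t. B (\<lambda>v. x0 v + t * (x1 v - x0 v)) = poly q t" using pf_line[OF B] by blast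
  have "\<forall>t. poly (p * q) t = 0"
  proof
    fix t
    show "poly (p * q) t = 0"
      using GB[of "\<lambda>v. x0 v + t * (x1 v - x0 v)"] p q by (cases "poly q t = 0") auto
  qed
  then have pq: "p * q = 0" using poly_all_0_iff_0 by blast
  have "poly q 1 = B x1" using q[rule_format, of 1] by simp
  then have "q \<noteq> 0" using B1 by auto
  then have "p = 0" using pq by simp
  then show ?thesis using p[rule_format, of 0] by simp
qed



definition xb :: "nat \<Rightarrow> complex" where
  "xb n = (if n = 0 then 1 else if n = 2 then -1 else if n = 3 then 1 else if n = 4 then -1
           else if n = 5 then 1 else if n = 7 then 1 else if n = 8 then 1 else 0)"

lemma Phi_xb: "Phi xb = (\<lambda>i. if i = 1 then 1 else if i = 3 then -1 else 0)"
proof -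
  have "smult (xb 0) ([:xb 5, -xb 1:] * [:xb 6, -xb 2:] * [:xb 7, -xb 3:] * [:xb 8, -xb 4:]) = [:0, 1, 0, -1:]"
    by (simp add: xb_def)
  then show ?thesis unfolding Phi_poly
    by (auto simp: fun_eq_iff coeff_pCons split: nat.splits)
qed

lemma hess_Phi_xb: "hess (Phi xb) 0 = -9" "hess (Phi xb) 1 = 0"
proof -
  have e: "hess (Phi xb) = hq (Phi xb)" by (rule hess_hq[OF Phi_quartic])
  show "hess (Phi xb) 0 = -9" "hess (Phi xb) 1 = 0" unfolding e unfolding hq_def Phi_xb by simp_all
qed

lemma lspan_scale: assumes "d \<noteq> 0" shows "lspan [\<lambda>i. d * f i, g] = lspan [f, g]"
proof
  show "lspan [\<lambda>i. d * f i, g] \<subseteq> lspan [f, g]"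
  proof
    fix h assume "h \<in> lspan [\<lambda>i. d * f i, g]"
    then obtain a b where "h = (\<lambda>i. a * (d * f i) + b * g i)" unfolding lspan2 by blast
    then have "h = (\<lambda>i. (a * d) * f i + b * g i)" by (simp add: mult.assoc)
    then show "h \<in> lspan [f, g]" unfolding lspan2 by blast
  qed
  show "lspan [f, g] \<subseteq> lspan [\<lambda>i. d * f i, g]"
  proof
    fix h assume "h \<in> lspan [f, g]"
    then obtain a b where "h = (\<lambda>i. a * f i + b * g i)" unfolding lspan2 by blast
    then have "h = (\<lambda>i. (a / d) * (d * f i) + b * g i)" using assms by simp
    then show "h \<in> lspan [\<lambda>i. d * f i, g]" unfolding lspan2 by blast
  qed
qed

lemma pf_pl: assumes "\<And>i. (\<lambda>x. A x i) \<in> polyfun" "\<And>i. (\<lambda>x. B x i) \<in> polyfun"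
  shows "(\<lambda>x. pluecker (A x) (B x) v) \<in> polyfun"
proof -
  obtain i j where v: "v = (i, j)" by (cases v)
  show ?thesis unfolding v pluecker_def using assms by (simp add: pf_diff pf_mult)
qed

definition Bx :: "(nat \<Rightarrow> complex) \<Rightarrow> complex" where
  "Bx x = x 0 * ((x 1 * x 6 - x 2 * x 5) * (x 1 * x 7 - x 3 * x 5) * (x 1 * x 8 - x 4 * x 5)
     * (x 2 * x 7 - x 3 * x 6) * (x 2 * x 8 - x 4 * x 6) * (x 3 * x 8 - x 4 * x 7))
     * (Phi x 1 * hess (Phi x) 0 - Phi x 0 * hess (Phi x) 1)"

lemma pf_Bx: "Bx \<in> polyfun"
proof -
  have h: "(\<lambda>x. hess (Phi x) k) \<in> polyfun" for k by (rule pf_hess) (rule pf_Phi)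
  show ?thesis unfolding Bx_def
    by (rule pf_mult pf_diff pf_var h pf_Phi)+
qed

lemma Bx_xb: "Bx xb \<noteq> 0"
  unfolding Bx_def hess_Phi_xb by (simp add: Phi_xb xb_def)

lemma Bx_fsr: assumes "Bx x \<noteq> 0" shows "four_simple_roots (Phi x)"
proof -
  define p where "p j = [x 1, x 2, x 3, x 4] ! j" for j
  define q where "q j = [x 5, x 6, x 7, x 8] ! j" for j
  have nz: "x 0 \<noteq> 0" "x 1 * x 6 - x 2 * x 5 \<noteq> 0" "x 1 * x 7 - x 3 * x 5 \<noteq> 0" "x 1 * x 8 - x 4 * x 5 \<noteq> 0"
     "x 2 * x 7 - x 3 * x 6 \<noteq> 0" "x 2 * x 8 - x 4 * x 6 \<noteq> 0" "x 3 * x 8 - x 4 * x 7 \<noteq> 0"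
    using assms by (auto simp: Bx_def)
  have dist: "\<forall>j<4. \<forall>k<4. j \<noteq> k \<longrightarrow> p j * q k \<noteq> p k * q j"
  proof (intro allI impI)
    fix j k :: nat assume "j < 4" "k < 4" "j \<noteq> k"
    then have "(j = 0 \<or> j = 1 \<or> j = 2 \<or> j = 3) \<and> (k = 0 \<or> k = 1 \<or> k = 2 \<or> k = 3)" by auto
    then show "p j * q k \<noteq> p k * q j" using nz \<open>j \<noteq> k\<close>
      by (elim conjE disjE) (simp_all add: p_def q_def algebra_simps)
  qed
  have nz2: "\<forall>j<4. p j \<noteq> 0 \<or> q j \<noteq> 0"
  proof (intro allI impI)
    fix j :: nat assume j: "j < 4"
    have "\<exists>k::nat. k < 4 \<and> k \<noteq> j" by (cases "j = 0") (rule exI[of _ 1], simp, rule exI[of _ 0], simp)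
    then obtain k where k: "k < 4" "k \<noteq> j" by blast
    show "p j \<noteq> 0 \<or> q j \<noteq> 0" using dist j k by fastforce
  qed
  have "Phi x = (\<lambda>i. x 0 * fmul (fmul (fmul (linf (p 0) (q 0)) (linf (p 1) (q 1)))
                                   (linf (p 2) (q 2))) (linf (p 3) (q 3)) i)"
    by (simp add: Phi_def p_def q_def)
  then show ?thesis unfolding four_simple_roots_def using nz(1) dist nz2 by blast
qed

lemma lemmaB:
  assumes fq: "f \<in> quartics" and ind: "lindep_free [f, hess f]"
  shows "lspan [f, hess f] \<in> H3"
proof -
  have hfq: "hess f \<in> quartics" by (rule hess_quartic[OF fq])
  have LB: "line_basis (lspan [f, hess f]) f (hess f)" using fq hfq ind by (simp add: line_basis_def)
  then have G14: "lspan [f, hess f] \<in> G14" by (auto simp: G14_def)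
  have fnz: "f \<noteq> (\<lambda>i. 0)"
  proof
    assume "f = (\<lambda>i. 0)"
    then have z: "(\<lambda>i. 1 * f i + 0 * hess f i) = (\<lambda>i. 0)" by simp
    have R: "\<And>a b. (\<lambda>i. a * f i + b * hess f i) = (\<lambda>i. 0) \<Longrightarrow> a = 0 \<and> b = 0"
      using ind unfolding lindep2 by blast
    from R[OF z] show False by simp
  qed
  obtain x0 where x0: "Phi x0 = f" using factor_quartic[OF fq fnz] by blast
  have main: "F (pluecker f' g') = 0"
    if F: "F \<in> polyfun" and hS: "\<forall>M\<in>Sset. \<forall>f g. line_basis M f g \<longrightarrow> F (pluecker f g) = 0"
      and B': "line_basis (lspan [f, hess f]) f' g'" for F f' g'
  proof -
    have f'in: "f' \<in> lspan [f', g']" and g'in: "g' \<in> lspan [f', g']"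
      unfolding lspan2 by (rule exI[of _ 1], rule exI[of _ 0], simp, rule exI[of _ 0], rule exI[of _ 1], simp)
    have eqL: "lspan [f', g'] = lspan [f, hess f]" and ind': "lindep_free [f', g']"
      using B' by (auto simp: line_basis_def)
    obtain a b where fa: "f' = (\<lambda>i. a * f i + b * hess f i)" using f'in eqL lspan2 by auto
    obtain c e where gc: "g' = (\<lambda>i. c * f i + e * hess f i)" using g'in eqL lspan2 by auto
    define d where "d = a * e - b * c"
    have pl: "pluecker f' g' = pluecker (\<lambda>i. d * f i) (hess f)"
      by (simp add: fa gc d_def pluecker_def fun_eq_iff algebra_simps)
    have d0: "d \<noteq> 0"
    proof
      assume "d = 0"
      then have "\<forall>j k. pluecker f' g' (j, k) = 0" using pl by (simp add: pluecker_def)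
      then show False using indep_pl[OF ind'] by blast
    qed
    define G where "G x = F (pluecker (\<lambda>i. d * Phi x i) (hess (Phi x)))" for x
    have pG: "G \<in> polyfun" unfolding G_def
    proof (rule pf_comp[OF F])
      fix v
      show "(\<lambda>x. pluecker (\<lambda>i. d * Phi x i) (hess (Phi x)) v) \<in> polyfun"
        by (rule pf_pl) (rule pf_mult pf_const pf_Phi pf_hess)+
    qed
    have GB: "G x = 0" if Bn: "Bx x \<noteq> 0" for x
    proof -
      have min: "Phi x 1 * hess (Phi x) 0 - Phi x 0 * hess (Phi x) 1 \<noteq> 0" using Bn by (auto simp: Bx_def)
      have M: "lspan [Phi x, hess (Phi x)] \<in> Sset"
        unfolding Sset_def using Phi_quartic Bx_fsr[OF Bn] by blast
      have "(d * Phi x 1) * hess (Phi x) 0 - (d * Phi x 0) * hess (Phi x) 1 = d * (Phi x 1 * hess (Phi x) 0 - Phi x 0 * hess (Phi x) 1)"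
        by (simp add: algebra_simps)
      then have "(d * Phi x 1) * hess (Phi x) 0 - (d * Phi x 0) * hess (Phi x) 1 \<noteq> 0"
        using min d0 by simp
      then have indx: "lindep_free [\<lambda>i. d * Phi x i, hess (Phi x)]" by (rule minor_indep)
      have "line_basis (lspan [Phi x, hess (Phi x)]) (\<lambda>i. d * Phi x i) (hess (Phi x))"
        unfolding line_basis_def using indx lspan_scale[OF d0] Phi_quartic hess_quartic[OF Phi_quartic]
        by (simp add: quartics_def)
      then show ?thesis using hS M unfolding G_def by blast
    qed
    have "G x0 = 0" by (rule density[OF pG pf_Bx GB Bx_xb])
    then show ?thesis using pl x0 G_def by simp
  qed
  have "lspan [f, hess f] \<in> zclosure Sset"
    unfolding zclosure_def using G14 main by blast
  then show ?thesis using H3_Sset by simp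
qed



lemma span_eq:
  assumes ind: "lindep_free [v, w]" and v: "v \<in> lspan [f, g]" and w: "w \<in> lspan [f, g]"
  shows "lspan [v, w] = lspan [f, g]"
proof -
  have R: "\<And>a b. (\<lambda>i. a * v i + b * w i) = (\<lambda>i. 0) \<Longrightarrow> a = 0 \<and> b = 0"
    using ind unfolding lindep2 by blast
  obtain a b where va: "v = (\<lambda>i. a * f i + b * g i)" using v lspan2 by blast
  obtain c e where wc: "w = (\<lambda>i. c * f i + e * g i)" using w lspan2 by blast
  define D where "D = a * e - b * c"
  have e1: "(\<lambda>i. e * v i + (- b) * w i) = (\<lambda>i. D * f i)" by (simp add: va wc D_def fun_eq_iff algebra_simps)
  have e2: "(\<lambda>i. (- c) * v i + a * w i) = (\<lambda>i. D * g i)" by (simp add: va wc D_def fun_eq_iff algebra_simps)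
  have D0: "D \<noteq> 0"
  proof
    assume "D = 0"
    then have z1: "(\<lambda>i. e * v i + (- b) * w i) = (\<lambda>i. 0)" and z2: "(\<lambda>i. (- c) * v i + a * w i) = (\<lambda>i. 0)"
      using e1 e2 by simp_all
    have "e = 0 \<and> - b = 0" "- c = 0 \<and> a = 0" using R[OF z1] R[OF z2] by simp_all
    then have "v = (\<lambda>i. 0)" using va by simp
    then have "(\<lambda>i. 1 * v i + 0 * w i) = (\<lambda>i. 0)" by simp
    from R[OF this] show False by simp
  qed
  have fv: "f = (\<lambda>i. (e / D) * v i + (- b / D) * w i)"
  proof
    fix i
    have "e * v i + (- b) * w i = D * f i" using fun_cong[OF e1, of i] by simp
    then show "f i = (e / D) * v i + (- b / D) * w i" using D0 by (simp add: field_simps)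
  qed
  have gv: "g = (\<lambda>i. (- c / D) * v i + (a / D) * w i)"
  proof
    fix i
    have "(- c) * v i + a * w i = D * g i" using fun_cong[OF e2, of i] by simp
    then show "g i = (- c / D) * v i + (a / D) * w i" using D0 by (simp add: field_simps)
  qed
  have "f \<in> lspan [v, w]" "g \<in> lspan [v, w]" using fv gv unfolding lspan2 by blast+
  show ?thesis
  proof
    show "lspan [v, w] \<subseteq> lspan [f, g]"
    proof
      fix h assume "h \<in> lspan [v, w]"
      then obtain a b where "h = (\<lambda>i. a * v i + b * w i)" using lspan2 by blast
      then show "h \<in> lspan [f, g]" using lspan2_lin[OF v w] by simp
    qed
    show "lspan [f, g] \<subseteq> lspan [v, w]"
    proof
      fix h assume "h \<in> lspan [f, g]"
      then obtain a b where "h = (\<lambda>i. a * f i + b * g i)" using lspan2 by blast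
      then show "h \<in> lspan [v, w]" using lspan2_lin[OF \<open>f \<in> lspan [v, w]\<close> \<open>g \<in> lspan [v, w]\<close>] by simp
    qed
  qed
qed

lemma part1: "\<exists>F \<in> polyfun. (\<exists>p \<in> quartics. F p \<noteq> 0) \<and>
           (\<forall>p \<in> quartics. p \<noteq> (\<lambda>i. 0) \<and> F p \<noteq> 0 \<longrightarrow>
              card (H3 \<inter> Omega04 p) = 1)"
proof -
  define F1 :: "bform \<Rightarrow> complex" where "F1 p = p 1 * hess p 0 - p 0 * hess p 1" for p
  have pF: "F1 \<in> polyfun" unfolding F1_def
    by (rule pf_diff pf_mult pf_var pf_hess)+
  have ex: "\<exists>p \<in> quartics. F1 p \<noteq> 0"
    using Phi_quartic[of xb] hess_Phi_xb by (intro bexI[of _ "Phi xb"]) (simp_all add: F1_def Phi_xb)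
  have card: "card (H3 \<inter> Omega04 p) = 1" if pq: "p \<in> quartics" and Fp: "F1 p \<noteq> 0" for p
  proof -
    have ind: "lindep_free [p, hess p]" using Fp unfolding F1_def by (rule minor_indep)
    define L0 where "L0 = lspan [p, hess p]"
    have L0H: "L0 \<in> H3" using lemmaB[OF pq ind] L0_def by simp
    have L0G: "L0 \<in> G14" using pq hess_quartic[OF pq] ind L0_def by (auto simp: G14_def line_basis_def)
    have pL0: "p \<in> L0" unfolding L0_def lspan2 by (rule exI[of _ 1], rule exI[of _ 0], simp)
    have "H3 \<inter> Omega04 p = {L0}"
    proof
      show "{L0} \<subseteq> H3 \<inter> Omega04 p" using L0H L0G pL0 by (simp add: Omega04_def)
      show "H3 \<inter> Omega04 p \<subseteq> {L0}"
      proof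
        fix L assume L: "L \<in> H3 \<inter> Omega04 p"
        then obtain f g where B: "line_basis L f g" by (auto simp: Omega04_def G14_def)
        have pL: "p \<in> L" using L by (simp add: Omega04_def)
        have hpL: "hess p \<in> L" using lemmaA[of L f g p] L B pL by simp
        have Lfg: "L = lspan [f, g]" using B by (simp add: line_basis_def)
        have "lspan [p, hess p] = lspan [f, g]" using span_eq[OF ind] pL hpL Lfg by simp
        then show "L \<in> {L0}" using Lfg L0_def by simp
      qed
    qed
    then show ?thesis by simp
  qed
  show ?thesis using pF ex card by blast
qed



definition d2 :: "bform \<Rightarrow> bform \<Rightarrow> nat \<Rightarrow> nat \<Rightarrow> complex" where
  "d2 a b i j = a i * b j - a j * b i"
definition d3 :: "bform \<Rightarrow> bform \<Rightarrow> bform \<Rightarrow> nat \<Rightarrow> nat \<Rightarrow> nat \<Rightarrow> complex" where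
  "d3 a b c i j k = a i * d2 b c j k - a j * d2 b c i k + a k * d2 b c i j"
definition d4 :: "bform \<Rightarrow> bform \<Rightarrow> bform \<Rightarrow> bform \<Rightarrow> complex" where
  "d4 a b c e = a 0 * d3 b c e 1 2 3 - a 1 * d3 b c e 0 2 3 + a 2 * d3 b c e 0 1 3 - a 3 * d3 b c e 0 1 2"
definition Xd :: "bform \<Rightarrow> bform \<Rightarrow> bform \<Rightarrow> bform \<Rightarrow> bform \<Rightarrow> nat \<Rightarrow> complex" where
  "Xd u0 u1 u2 u3 w i = d4 u0 u1 u2 u3 * w i - (d4 w u1 u2 u3 * u0 i + d4 u0 w u2 u3 * u1 i
      + d4 u0 u1 w u3 * u2 i + d4 u0 u1 u2 w * u3 i)"

lemma cramer: "i < 4 \<Longrightarrow> Xd u0 u1 u2 u3 w i = 0"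
proof -
  assume "i < 4"
  then have "i = 0 \<or> i = 1 \<or> i = 2 \<or> i = 3" by auto
  then show ?thesis
    by (elim disjE; simp add: Xd_def d4_def d3_def d2_def; simp add: algebra_simps)
qed

lemma Xd_add: "Xd u0 u1 u2 u3 (\<lambda>i. v i + w i) k = Xd u0 u1 u2 u3 v k + Xd u0 u1 u2 u3 w k"
  by (simp add: Xd_def d4_def d3_def d2_def algebra_simps)
lemma Xd_smult: "Xd u0 u1 u2 u3 (\<lambda>i. c * v i) k = c * Xd u0 u1 u2 u3 v k"
  by (simp add: Xd_def d4_def d3_def d2_def algebra_simps)
lemma Xd_diff: "Xd u0 u1 u2 u3 (\<lambda>i. v i - w i) k = Xd u0 u1 u2 u3 v k - Xd u0 u1 u2 u3 w k"
  by (simp add: Xd_def d4_def d3_def d2_def algebra_simps)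

lemma Xd_basis: "Xd u0 u1 u2 u3 u0 k = 0" "Xd u0 u1 u2 u3 u1 k = 0" "Xd u0 u1 u2 u3 u2 k = 0" "Xd u0 u1 u2 u3 u3 k = 0"
  by (simp_all add: Xd_def d4_def d3_def d2_def algebra_simps)

lemma Xd_span: "Xd u0 u1 u2 u3 (\<lambda>i. a * u0 i + b * u1 i + c * u2 i + e * u3 i) k = 0"
  by (simp add: Xd_add Xd_smult Xd_basis)

lemma in_span4:
  assumes q: "u0 \<in> quartics" "u1 \<in> quartics" "u2 \<in> quartics" "u3 \<in> quartics" "w \<in> quartics"
    and N: "d4 u0 u1 u2 u3 \<noteq> 0" and X: "Xd u0 u1 u2 u3 w 4 = 0"
  shows "w \<in> lspan [u0, u1, u2, u3]"
proof -
  define N where "N = d4 u0 u1 u2 u3"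
  have "w i = (d4 w u1 u2 u3 / N) * u0 i + (d4 u0 w u2 u3 / N) * u1 i + (d4 u0 u1 w u3 / N) * u2 i
     + (d4 u0 u1 u2 w / N) * u3 i" for i
  proof (cases "i \<le> 4")
    case True
    have "Xd u0 u1 u2 u3 w i = 0"
    proof (cases "i = 4")
      case True then show ?thesis using X by simp
    next
      case False then show ?thesis using \<open>i \<le> 4\<close> by (intro cramer) simp
    qed
    then have "N * w i = d4 w u1 u2 u3 * u0 i + d4 u0 w u2 u3 * u1 i + d4 u0 u1 w u3 * u2 i + d4 u0 u1 u2 w * u3 i"
      by (simp add: Xd_def N_def)
    then show ?thesis using N N_def by (simp add: field_simps)
  next
    case False then show ?thesis using q by (simp add: quartics_def)
  qed
  then show ?thesis unfolding lspan4 by blast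
qed

definition Aq where "Aq u0 u1 u2 u3 = Xd u0 u1 u2 u3 (hess u0) 4"
definition Cq where "Cq u0 u1 u2 u3 = Xd u0 u1 u2 u3 (hess u1) 4"
definition Bq where "Bq u0 u1 u2 u3 = Xd u0 u1 u2 u3 (hess (\<lambda>i. u0 i + u1 i)) 4 - Aq u0 u1 u2 u3 - Cq u0 u1 u2 u3"

lemma Qform:
  assumes "u0 \<in> quartics" "u1 \<in> quartics"
  shows "Xd u0 u1 u2 u3 (hess (\<lambda>i. a * u0 i + b * u1 i)) 4 =
     Aq u0 u1 u2 u3 * a * a + Bq u0 u1 u2 u3 * a * b + Cq u0 u1 u2 u3 * b * b"
proof -
  have q: "(\<lambda>i. a * u0 i + b * u1 i) \<in> quartics" "(\<lambda>i. u0 i + u1 i) \<in> quartics"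
    using assms by (simp_all add: quartics_def)
  have "hess (\<lambda>i. a * u0 i + b * u1 i) = (\<lambda>i. a*a*hq u0 i + a*b*(hq (\<lambda>i. u0 i + u1 i) i - hq u0 i - hq u1 i) + b*b*hq u1 i)"
    unfolding hess_hq[OF q(1)] by (rule ext) (rule hq_quad)
  then show ?thesis
    unfolding Aq_def Bq_def Cq_def hess_hq[OF q(2)] hess_hq[OF assms(1)] hess_hq[OF assms(2)]
    by (simp add: Xd_add Xd_smult Xd_diff algebra_simps)
qed

definition mm :: "bform \<Rightarrow> bform \<Rightarrow> complex" where "mm a b = a 0 * b 1 - a 1 * b 0"
definition Kv :: "bform \<Rightarrow> bform \<Rightarrow> bform" where
  "Kv u0 u1 = (\<lambda>i. hess (\<lambda>l. u0 l + u1 l) i - hess u0 i - hess u1 i)"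
definition "r3 u0 u1 = mm u0 (hess u0)"
definition "r2 u0 u1 = mm u0 (Kv u0 u1) + mm u1 (hess u0)"
definition "r1 u0 u1 = mm u0 (hess u1) + mm u1 (Kv u0 u1)"
definition "r0 u0 u1 = mm u1 (hess u1)"

lemma Rform:
  assumes q: "u0 \<in> quartics" "u1 \<in> quartics"
  shows "mm (\<lambda>i. s * u0 i + u1 i) (hess (\<lambda>i. s * u0 i + u1 i)) =
     r3 u0 u1 * s^3 + r2 u0 u1 * s^2 + r1 u0 u1 * s + r0 u0 u1"
proof -
  have q2: "(\<lambda>i. s * u0 i + 1 * u1 i) \<in> quartics" "(\<lambda>i. u0 i + u1 i) \<in> quartics"
    using q by (simp_all add: quartics_def)
  have "hess (\<lambda>i. s * u0 i + 1 * u1 i) = (\<lambda>i. s*s*hq u0 i + s*1*(hq (\<lambda>i. u0 i + u1 i) i - hq u0 i - hq u1 i) + 1*1*hq u1 i)"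
    unfolding hess_hq[OF q2(1)] by (rule ext) (rule hq_quad)
  then have h: "hess (\<lambda>i. s * u0 i + u1 i) = (\<lambda>i. s*s*hess u0 i + s * Kv u0 u1 i + hess u1 i)"
    unfolding Kv_def hess_hq[OF q2(2)] hess_hq[OF q(1)] hess_hq[OF q(2)] by simp
  show ?thesis unfolding h by (simp add: mm_def r3_def r2_def r1_def r0_def Kv_def power2_eq_square power3_eq_cube algebra_simps)
qed

definition "alq u0 u1 u2 u3 = r3 u0 u1 * ((Bq u0 u1 u2 u3)^2 - Aq u0 u1 u2 u3 * Cq u0 u1 u2 u3)
   - r2 u0 u1 * Aq u0 u1 u2 u3 * Bq u0 u1 u2 u3 + (Aq u0 u1 u2 u3)^2 * r1 u0 u1"
definition "beq u0 u1 u2 u3 = r3 u0 u1 * Bq u0 u1 u2 u3 * Cq u0 u1 u2 u3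
   - r2 u0 u1 * Aq u0 u1 u2 u3 * Cq u0 u1 u2 u3 + (Aq u0 u1 u2 u3)^2 * r0 u0 u1"
definition "rhoq u0 u1 u2 u3 = (alq u0 u1 u2 u3)^2 * Cq u0 u1 u2 u3
   - alq u0 u1 u2 u3 * beq u0 u1 u2 u3 * Bq u0 u1 u2 u3 + (beq u0 u1 u2 u3)^2 * Aq u0 u1 u2 u3"

lemma reduce_identity:
  fixes A B C R3 R2 R1 R0 s :: complex
  shows "A^2 * (R3 * s^3 + R2 * s^2 + R1 * s + R0) =
    (R3 * (B^2 - A * C) - R2 * A * B + A^2 * R1) * s + (R3 * B * C - R2 * A * C + A^2 * R0)
    + (A * s^2 + B * s + C) * (A * R3 * s + A * R2 - B * R3)"
  by (simp add: power2_eq_square power3_eq_cube algebra_simps)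

lemma Rnz:
  assumes q: "u0 \<in> quartics" "u1 \<in> quartics"
    and A: "Aq u0 u1 u2 u3 \<noteq> 0" and rho: "rhoq u0 u1 u2 u3 \<noteq> 0"
    and root: "Aq u0 u1 u2 u3 * s^2 + Bq u0 u1 u2 u3 * s + Cq u0 u1 u2 u3 = 0"
  shows "mm (\<lambda>i. s * u0 i + u1 i) (hess (\<lambda>i. s * u0 i + u1 i)) \<noteq> 0"
proof
  assume z: "mm (\<lambda>i. s * u0 i + u1 i) (hess (\<lambda>i. s * u0 i + u1 i)) = 0"
  define al where "al = alq u0 u1 u2 u3"
  define be where "be = beq u0 u1 u2 u3"
  have "al * s + be = 0"
    using reduce_identity[of "Aq u0 u1 u2 u3" "r3 u0 u1" s "r2 u0 u1" "r1 u0 u1" "r0 u0 u1" "Bq u0 u1 u2 u3" "Cq u0 u1 u2 u3"]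
      z root Rform[OF q, of s]
    unfolding al_def be_def alq_def beq_def by simp
  then have be: "be = - al * s" by (simp add: eq_neg_iff_add_eq_0 add.commute)
  have "rhoq u0 u1 u2 u3 = al * al * (Aq u0 u1 u2 u3 * s^2 + Bq u0 u1 u2 u3 * s + Cq u0 u1 u2 u3)"
    unfolding rhoq_def al_def[symmetric] be_def[symmetric] be by (simp add: power2_eq_square algebra_simps)
  then show False using rho root by simp
qed

lemma three_in_span:
  assumes "a \<in> lspan [f, g]" "b \<in> lspan [f, g]" "h \<in> lspan [f, g]"
  shows "Wd h (pluecker a b) i j k = 0"
proof -
  obtain a1 a2 where "a = (\<lambda>i. a1 * f i + a2 * g i)" using assms(1) lspan2 by blast
  moreover obtain b1 b2 where "b = (\<lambda>i. b1 * f i + b2 * g i)" using assms(2) lspan2 by blast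
  moreover obtain h1 h2 where "h = (\<lambda>i. h1 * f i + h2 * g i)" using assms(3) lspan2 by blast
  ultimately show ?thesis by (simp add: Wd_def pluecker_def algebra_simps)
qed

lemma quad_roots:
  fixes A B C :: complex
  assumes A: "A \<noteq> 0" and D: "B^2 - 4 * A * C \<noteq> 0"
  shows "\<exists>s1 s2. s1 \<noteq> s2 \<and> (\<forall>s. A * s^2 + B * s + C = 0 \<longleftrightarrow> s = s1 \<or> s = s2)"
proof -
  define sq where "sq = csqrt (B^2 - 4 * A * C)"
  have sq2: "sq^2 = B^2 - 4 * A * C" by (simp add: sq_def)
  have sq0: "sq \<noteq> 0" using D by (simp add: sq_def)
  define s1 where "s1 = (- B + sq) / (2 * A)"
  define s2 where "s2 = (- B - sq) / (2 * A)"
  have ne: "s1 \<noteq> s2" using sq0 A by (simp add: s1_def s2_def divide_simps)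
  have fac: "A * s^2 + B * s + C = A * (s - s1) * (s - s2)" for s
  proof -
    have "4 * A * (A * (s - s1) * (s - s2)) = (2 * A * s + B - sq) * (2 * A * s + B + sq)"
      using A by (simp add: s1_def s2_def field_simps)
    also have "\<dots> = 4 * A * (A * s^2 + B * s + C)"
      using sq2 by (simp add: algebra_simps power2_eq_square)
    finally show ?thesis using A by simp
  qed
  have "\<forall>s. A * s^2 + B * s + C = 0 \<longleftrightarrow> s = s1 \<or> s = s2" using fac A by simp
  then show ?thesis using ne by blast
qed

lemma lspan4_lin: "v \<in> lspan [u0, u1, u2, u3] \<Longrightarrow> w \<in> lspan [u0, u1, u2, u3] \<Longrightarrow>
   (\<lambda>i. a * v i + b * w i) \<in> lspan [u0, u1, u2, u3]"
proof -
  assume "v \<in> lspan [u0, u1, u2, u3]" "w \<in> lspan [u0, u1, u2, u3]"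
  then obtain a1 b1 c1 d1 a2 b2 c2 d2 where
    "v = (\<lambda>i. a1 * u0 i + b1 * u1 i + c1 * u2 i + d1 * u3 i)" "w = (\<lambda>i. a2 * u0 i + b2 * u1 i + c2 * u2 i + d2 * u3 i)"
    unfolding lspan4 by blast
  then have "(\<lambda>i. a * v i + b * w i) = (\<lambda>i. (a*a1+b*a2) * u0 i + (a*b1+b*b2) * u1 i + (a*c1+b*c2) * u2 i + (a*d1+b*d2) * u3 i)"
    by (simp add: fun_eq_iff algebra_simps)
  then show ?thesis unfolding lspan4 by blast
qed

lemma count2:
  assumes q: "u0 \<in> quartics" "u1 \<in> quartics" "u2 \<in> quartics" "u3 \<in> quartics"
    and N: "d4 u0 u1 u2 u3 \<noteq> 0" and A: "Aq u0 u1 u2 u3 \<noteq> 0"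
    and D: "(Bq u0 u1 u2 u3)^2 - 4 * Aq u0 u1 u2 u3 * Cq u0 u1 u2 u3 \<noteq> 0"
    and rho: "rhoq u0 u1 u2 u3 \<noteq> 0" and W: "Wd (hess u0) (pluecker u0 u1) 0 1 2 \<noteq> 0"
  shows "card (H3 \<inter> Omega13 u0 u1 u2 u3) = 2"
proof -
  let ?A = "Aq u0 u1 u2 u3" and ?B = "Bq u0 u1 u2 u3" and ?C = "Cq u0 u1 u2 u3"
  let ?Lam = "lspan [u0, u1, u2, u3]"
  obtain s1 s2 where ne: "s1 \<noteq> s2" and roots: "\<And>s. ?A * s^2 + ?B * s + ?C = 0 \<longleftrightarrow> s = s1 \<or> s = s2"
    using quad_roots[OF A D] by blast
  define vv where "vv s = (\<lambda>i. s * u0 i + u1 i)" for s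
  define LL where "LL s = lspan [vv s, hess (vv s)]" for s
  have vq: "vv s \<in> quartics" for s using q by (simp add: vv_def quartics_def)
  have hvq: "hess (vv s) \<in> quartics" for s using hess_quartic[OF vq] .
  have ind: "lindep_free [vv s, hess (vv s)]" if r: "?A * s^2 + ?B * s + ?C = 0" for s
    using Rnz[OF q(1,2) A rho r] unfolding vv_def mm_def by (rule minor_indep)
  have LB: "line_basis (LL s) (vv s) (hess (vv s))" if r: "?A * s^2 + ?B * s + ?C = 0" for s
    using vq hvq ind[OF r] by (simp add: line_basis_def LL_def)
  have vin: "vv s \<in> LL s" for s unfolding LL_def lspan2 by (rule exI[of _ 1], rule exI[of _ 0], simp)
  have hvin: "hess (vv s) \<in> LL s" for s unfolding LL_def lspan2 by (rule exI[of _ 0], rule exI[of _ 1], simp)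
  have inOm: "LL s \<in> H3 \<inter> Omega13 u0 u1 u2 u3" if r: "?A * s^2 + ?B * s + ?C = 0" for s
  proof -
    have H: "LL s \<in> H3" unfolding LL_def by (rule lemmaB[OF vq ind[OF r]])
    have G: "LL s \<in> G14" using LB[OF r] by (auto simp: G14_def)
    have v1: "vv s \<in> ?Lam" unfolding lspan4 vv_def
      by (rule exI[of _ s], rule exI[of _ 1], rule exI[of _ 0], rule exI[of _ 0], simp)
    have "Xd u0 u1 u2 u3 (hess (vv s)) 4 = 0"
      using Qform[OF q(1,2), where a=s and b=1] r by (simp add: vv_def power2_eq_square mult.assoc)
    then have v2: "hess (vv s) \<in> ?Lam" using in_span4[OF q hvq N] by simp
    have sub: "LL s \<subseteq> ?Lam"
    proof
      fix h assume "h \<in> LL s"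
      then obtain a b where "h = (\<lambda>i. a * vv s i + b * hess (vv s) i)" unfolding LL_def lspan2 by blast
      then show "h \<in> ?Lam" using lspan4_lin[OF v1 v2] by simp
    qed
    have vl: "vv s \<in> lspan [u0, u1]" unfolding lspan2 vv_def by (rule exI[of _ s], rule exI[of _ 1], simp)
    have vnz: "vv s \<noteq> (\<lambda>i. 0)"
    proof
      assume "vv s = (\<lambda>i. 0)"
      then have "mm (vv s) (hess (vv s)) = 0" by (simp add: mm_def)
      then show False using Rnz[OF q(1,2) A rho r] by (simp add: vv_def)
    qed
    show ?thesis using H G sub vin vl vnz by (auto simp: Omega13_def)
  qed
  have r1: "?A * s1^2 + ?B * s1 + ?C = 0" and r2: "?A * s2^2 + ?B * s2 + ?C = 0" using roots by auto
  have dist: "LL s1 \<noteq> LL s2"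
  proof
    assume eq: "LL s1 = LL s2"
    let ?L = "LL s1"
    have a1: "vv s1 \<in> ?L" by (rule vin)
    have a2: "vv s2 \<in> ?L" using vin[of s2] eq by simp
    have Ls: "?L = lspan [vv s1, hess (vv s1)]" by (simp add: LL_def)
    have "(\<lambda>i. (1 / (s1 - s2)) * vv s1 i + (- 1 / (s1 - s2)) * vv s2 i) \<in> ?L"
      using lspan2_lin a1 a2 Ls by metis
    moreover have "(\<lambda>i. (1 / (s1 - s2)) * vv s1 i + (- 1 / (s1 - s2)) * vv s2 i) = u0"
    proof
      fix i
      have nz: "s1 - s2 \<noteq> 0" using ne by simp
      have e: "vv s1 i - vv s2 i = (s1 - s2) * u0 i" by (simp add: vv_def algebra_simps)
      have "(1 / (s1 - s2)) * vv s1 i + (- 1 / (s1 - s2)) * vv s2 i = (vv s1 i - vv s2 i) / (s1 - s2)"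
        by (simp add: diff_divide_distrib)
      also have "\<dots> = u0 i" using e nz by simp
      finally show "(1 / (s1 - s2)) * vv s1 i + (- 1 / (s1 - s2)) * vv s2 i = u0 i" .
    qed
    ultimately have u0L: "u0 \<in> ?L" by simp
    have "(\<lambda>i. 1 * vv s1 i + (- s1) * u0 i) \<in> ?L" using lspan2_lin a1 u0L Ls by metis
    then have u1L: "u1 \<in> ?L" by (simp add: vv_def)
    have hu0: "hess u0 \<in> ?L" using lemmaA[OF inOm[OF r1, THEN IntD1] LB[OF r1] u0L] .
    have "Wd (hess u0) (pluecker u0 u1) 0 1 2 = 0" using three_in_span u0L u1L hu0 Ls by metis
    then show False using W by simp
  qed
  have every: "L = LL s1 \<or> L = LL s2" if L: "L \<in> H3 \<inter> Omega13 u0 u1 u2 u3" for L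
  proof -
    have LH: "L \<in> H3" and LG: "L \<in> G14" and Lsub: "L \<subseteq> ?Lam"
      and ex: "\<exists>v \<in> L \<inter> lspan [u0, u1]. v \<noteq> (\<lambda>i. 0)"
      using L by (auto simp: Omega13_def)
    obtain f g where B: "line_basis L f g" using LG by (auto simp: G14_def)
    have Lfg: "L = lspan [f, g]" using B by (simp add: line_basis_def)
    obtain v where vL: "v \<in> L" and vl: "v \<in> lspan [u0, u1]" and vnz: "v \<noteq> (\<lambda>i. 0)" using ex by blast
    obtain al be where vab: "v = (\<lambda>i. al * u0 i + be * u1 i)" using vl lspan2 by blast
    have hv: "hess v \<in> L" by (rule lemmaA[OF LH B vL])
    then have "hess v \<in> ?Lam" using Lsub by blast
    then obtain a b c e where "hess v = (\<lambda>i. a * u0 i + b * u1 i + c * u2 i + e * u3 i)" unfolding lspan4 by blast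
    then have "Xd u0 u1 u2 u3 (hess v) 4 = 0" using Xd_span by simp
    then have Q0: "?A * al * al + ?B * al * be + ?C * be * be = 0" using Qform[OF q(1,2), where a=al and b=be] vab by simp
    have be0: "be \<noteq> 0"
    proof
      assume "be = 0"
      then have "?A * al * al = 0" using Q0 by simp
      then have "al = 0" using A by simp
      then show False using vnz vab \<open>be = 0\<close> by simp
    qed
    define s where "s = al / be"
    have "?A * s^2 + ?B * s + ?C = (?A * al * al + ?B * al * be + ?C * be * be) / (be * be)"
      using be0 by (simp add: s_def field_simps power2_eq_square)
    then have rs: "?A * s^2 + ?B * s + ?C = 0" using Q0 by simp
    have vs: "v = (\<lambda>i. be * vv s i)" using be0 by (simp add: vab vv_def s_def fun_eq_iff field_simps)
    have hvs: "hess v = (\<lambda>i. (be * be) * hess (vv s) i)"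
    proof -
      have "(\<lambda>i. be * vv s i) \<in> quartics" using vq[of s] by (simp add: quartics_def)
      then show ?thesis unfolding vs hess_hq[OF vq] by (simp add: hess_hq hq_scale fun_eq_iff)
    qed
    have "(\<lambda>i. (1 / be) * v i + 0 * v i) \<in> L" using lspan2_lin vL Lfg by metis
    then have x1: "vv s \<in> L" using be0 by (simp add: vs)
    have "(\<lambda>i. (1 / (be * be)) * hess v i + 0 * hess v i) \<in> L" using lspan2_lin hv Lfg by metis
    then have x2: "hess (vv s) \<in> L" using be0 by (simp add: hvs)
    have "lspan [vv s, hess (vv s)] = lspan [f, g]" using span_eq[OF ind[OF rs]] x1 x2 Lfg by simp
    then have "L = LL s" using Lfg LL_def by simp
    moreover have "s = s1 \<or> s = s2" using roots rs by blast
    ultimately show ?thesis by blast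
  qed
  have "H3 \<inter> Omega13 u0 u1 u2 u3 = {LL s1, LL s2}"
    using every inOm[OF r1] inOm[OF r2] by blast
  then show ?thesis using dist by simp
qed



definition pv :: "(('v \<Rightarrow> complex) \<Rightarrow> bform) \<Rightarrow> bool" where
  "pv a \<longleftrightarrow> (\<forall>i. (\<lambda>x. a x i) \<in> polyfun)"

lemma pvD: "pv a \<Longrightarrow> (\<lambda>x. a x i) \<in> polyfun" by (simp add: pv_def)
lemma pv_frame: "pv (\<lambda>u. frame_vec u j)" by (simp add: pv_def frame_vec_def pf_var)
lemma pv_hess: "pv a \<Longrightarrow> pv (\<lambda>x. hess (a x))" unfolding pv_def by (auto intro: pf_hess)
lemma pv_add: "pv a \<Longrightarrow> pv b \<Longrightarrow> pv (\<lambda>x i. a x i + b x i)" unfolding pv_def by (auto intro: pf_add)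
lemma pv_diff: "pv a \<Longrightarrow> pv b \<Longrightarrow> pv (\<lambda>x i. a x i - b x i)" unfolding pv_def by (auto intro: pf_diff)

lemma pf_d2: assumes "pv a" "pv b" shows "(\<lambda>x. d2 (a x) (b x) i j) \<in> polyfun"
  unfolding d2_def by (intro pf_diff pf_mult pvD[OF assms(1)] pvD[OF assms(2)])
lemma pf_d3: assumes "pv a" "pv b" "pv c" shows "(\<lambda>x. d3 (a x) (b x) (c x) i j k) \<in> polyfun"
  unfolding d3_def by (intro pf_add pf_diff pf_mult pvD[OF assms(1)] pf_d2[OF assms(2,3)])
lemma pf_d4: assumes "pv a" "pv b" "pv c" "pv e" shows "(\<lambda>x. d4 (a x) (b x) (c x) (e x)) \<in> polyfun"
  unfolding d4_def by (intro pf_add pf_diff pf_mult pvD[OF assms(1)] pf_d3[OF assms(2,3,4)])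
lemma pf_Xd: assumes "pv a" "pv b" "pv c" "pv e" "pv w"
  shows "(\<lambda>x. Xd (a x) (b x) (c x) (e x) (w x) k) \<in> polyfun"
  unfolding Xd_def
  by (intro pf_add pf_diff pf_mult pvD[OF assms(1)] pvD[OF assms(2)] pvD[OF assms(3)] pvD[OF assms(4)] pvD[OF assms(5)]
     pf_d4[OF assms(1,2,3,4)] pf_d4[OF assms(5,2,3,4)] pf_d4[OF assms(1,5,3,4)] pf_d4[OF assms(1,2,5,4)] pf_d4[OF assms(1,2,3,5)])

lemma pf_mm: assumes "pv a" "pv b" shows "(\<lambda>x. mm (a x) (b x)) \<in> polyfun"
  unfolding mm_def by (intro pf_diff pf_mult pvD[OF assms(1)] pvD[OF assms(2)])

lemma pv_Kv: "pv a \<Longrightarrow> pv b \<Longrightarrow> pv (\<lambda>x. Kv (a x) (b x))"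
  unfolding Kv_def by (intro pv_diff pv_hess pv_add)

lemma pf_Aq: assumes "pv a" "pv b" "pv c" "pv e" shows "(\<lambda>x. Aq (a x) (b x) (c x) (e x)) \<in> polyfun"
  unfolding Aq_def by (rule pf_Xd[OF assms pv_hess[OF assms(1)]])
lemma pf_Cq: assumes "pv a" "pv b" "pv c" "pv e" shows "(\<lambda>x. Cq (a x) (b x) (c x) (e x)) \<in> polyfun"
  unfolding Cq_def by (rule pf_Xd[OF assms pv_hess[OF assms(2)]])
lemma pf_Bq: assumes "pv a" "pv b" "pv c" "pv e" shows "(\<lambda>x. Bq (a x) (b x) (c x) (e x)) \<in> polyfun"
  unfolding Bq_def
  by (intro pf_diff pf_Aq[OF assms] pf_Cq[OF assms] pf_Xd[OF assms pv_hess[OF pv_add[OF assms(1,2)]]])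
lemma pf_r: assumes "pv a" "pv b"
  shows "(\<lambda>x. r3 (a x) (b x)) \<in> polyfun" "(\<lambda>x. r2 (a x) (b x)) \<in> polyfun"
   "(\<lambda>x. r1 (a x) (b x)) \<in> polyfun" "(\<lambda>x. r0 (a x) (b x)) \<in> polyfun"
  unfolding r3_def r2_def r1_def r0_def
  by (intro pf_add pf_mm assms pv_hess pv_Kv)+

lemma pf_alq: assumes "pv a" "pv b" "pv c" "pv e" shows "(\<lambda>x. alq (a x) (b x) (c x) (e x)) \<in> polyfun"
  unfolding alq_def power2_eq_square
  by (intro pf_add pf_diff pf_mult pf_r[OF assms(1,2)] pf_Aq[OF assms] pf_Bq[OF assms] pf_Cq[OF assms])
lemma pf_beq: assumes "pv a" "pv b" "pv c" "pv e" shows "(\<lambda>x. beq (a x) (b x) (c x) (e x)) \<in> polyfun"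
  unfolding beq_def power2_eq_square
  by (intro pf_add pf_diff pf_mult pf_r[OF assms(1,2)] pf_Aq[OF assms] pf_Bq[OF assms] pf_Cq[OF assms])
lemma pf_rhoq: assumes "pv a" "pv b" "pv c" "pv e" shows "(\<lambda>x. rhoq (a x) (b x) (c x) (e x)) \<in> polyfun"
  unfolding rhoq_def power2_eq_square
  by (intro pf_add pf_diff pf_mult pf_alq[OF assms] pf_beq[OF assms] pf_Aq[OF assms] pf_Bq[OF assms] pf_Cq[OF assms])

definition F2 :: "(nat \<times> nat \<Rightarrow> complex) \<Rightarrow> complex" where
  "F2 u = d4 (frame_vec u 0) (frame_vec u 1) (frame_vec u 2) (frame_vec u 3)
     * Aq (frame_vec u 0) (frame_vec u 1) (frame_vec u 2) (frame_vec u 3)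
     * ((Bq (frame_vec u 0) (frame_vec u 1) (frame_vec u 2) (frame_vec u 3))^2
        - 4 * Aq (frame_vec u 0) (frame_vec u 1) (frame_vec u 2) (frame_vec u 3)
            * Cq (frame_vec u 0) (frame_vec u 1) (frame_vec u 2) (frame_vec u 3))
     * rhoq (frame_vec u 0) (frame_vec u 1) (frame_vec u 2) (frame_vec u 3)
     * Wd (hess (frame_vec u 0)) (pluecker (frame_vec u 0) (frame_vec u 1)) 0 1 2"

lemma pf_F2: "F2 \<in> polyfun"
proof -
  note P = pv_frame[of 0] pv_frame[of 1] pv_frame[of 2] pv_frame[of 3]
  have W: "(\<lambda>u. Wd (hess (frame_vec u 0)) (pluecker (frame_vec u 0) (frame_vec u 1)) 0 1 2) \<in> polyfun"
    unfolding Wd_def pluecker_def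
    by (simp only: case_prod_conv) (intro pf_add pf_diff pf_mult pvD[OF pv_hess[OF P(1)]] pvD[OF P(1)] pvD[OF P(2)])
  show ?thesis unfolding F2_def power2_eq_square
    by (intro pf_mult pf_diff W pf_d4[OF P] pf_Aq[OF P] pf_Bq[OF P] pf_Cq[OF P] pf_rhoq[OF P] pf_const)
qed



definition us :: "nat \<times> nat \<Rightarrow> complex" where
  "us = (\<lambda>(j, i). if j = 0 then (if i = 0 \<or> i = 4 then 1 else 0)
     else if j = 1 then (if i = 1 then 1 else 0)
     else if j = 2 then (if i = 0 then -1 else if i = 2 then 1 else 0)
     else if j = 3 then (if i = 3 then 1 else 0) else 0)"

lemma usv: "frame_vec us 0 = (\<lambda>i. if i = 0 \<or> i = 4 then 1 else 0)"
  "frame_vec us 1 = (\<lambda>i. if i = 1 then 1 else 0)"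
  "frame_vec us 2 = (\<lambda>i. if i = 0 then -1 else if i = 2 then 1 else 0)"
  "frame_vec us 3 = (\<lambda>i. if i = 3 then 1 else 0)"
  by (simp_all add: frame_vec_def us_def)

lemma usq: "j < 4 \<Longrightarrow> frame_vec us j \<in> quartics"
  by (simp add: frame_vec_def us_def quartics_def)

lemma usq0: "frame_vec us 0 \<in> quartics" and usq1: "frame_vec us 1 \<in> quartics"
  using usq[of 0] usq[of 1] by simp_all

lemma hus:
  "hess (frame_vec us 0) = (\<lambda>i. if i = 2 then 144 else 0)"
  "hess (frame_vec us 1) = (\<lambda>i. if i = 0 then -9 else 0)"
  "hess (\<lambda>i. frame_vec us 0 i + frame_vec us 1 i) = (\<lambda>i. if i = 0 then -9 else if i = 2 then 144 else if i = 3 then 72 else 0)"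
proof -
  have q: "(\<lambda>i. frame_vec us 0 i + frame_vec us 1 i) \<in> quartics" using usq0 usq1 by (simp add: quartics_def)
  show "hess (frame_vec us 0) = (\<lambda>i. if i = 2 then 144 else 0)"
    unfolding hess_hq[OF usq0] unfolding usv by (simp add: hq_def fun_eq_iff)
  show "hess (frame_vec us 1) = (\<lambda>i. if i = 0 then -9 else 0)"
    unfolding hess_hq[OF usq1] unfolding usv by (simp add: hq_def fun_eq_iff)
  show "hess (\<lambda>i. frame_vec us 0 i + frame_vec us 1 i) = (\<lambda>i. if i = 0 then -9 else if i = 2 then 144 else if i = 3 then 72 else 0)"
    unfolding hess_hq[OF q] unfolding usv by (simp add: hq_def fun_eq_iff)
qed

lemma F2_us: "F2 us \<noteq> 0"
proof -
  let ?U0 = "frame_vec us 0" and ?U1 = "frame_vec us 1" and ?U2 = "frame_vec us 2" and ?U3 = "frame_vec us 3"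
  have N: "d4 ?U0 ?U1 ?U2 ?U3 = 1" unfolding usv by (simp add: d4_def d3_def d2_def)
  have A: "Aq ?U0 ?U1 ?U2 ?U3 = -144" unfolding Aq_def hus unfolding usv by (simp add: Xd_def d4_def d3_def d2_def)
  have C: "Cq ?U0 ?U1 ?U2 ?U3 = 9" unfolding Cq_def hus unfolding usv by (simp add: Xd_def d4_def d3_def d2_def)
  have XS: "Xd ?U0 ?U1 ?U2 ?U3 (hess (\<lambda>i. ?U0 i + ?U1 i)) 4 = -135"
    unfolding hus unfolding usv by (simp add: Xd_def d4_def d3_def d2_def)
  have B: "Bq ?U0 ?U1 ?U2 ?U3 = 0" unfolding Bq_def XS A C by simp
  have K: "Kv ?U0 ?U1 = (\<lambda>i. if i = 3 then 72 else 0)" unfolding Kv_def hus by (simp add: fun_eq_iff)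
  have r: "r3 ?U0 ?U1 = 0" "r2 ?U0 ?U1 = 0" "r1 ?U0 ?U1 = 0" "r0 ?U0 ?U1 = 9"
    unfolding r3_def r2_def r1_def r0_def K hus unfolding usv by (simp_all add: mm_def)
  have al: "alq ?U0 ?U1 ?U2 ?U3 = 0" unfolding alq_def r A B C by simp
  have be: "beq ?U0 ?U1 ?U2 ?U3 = 186624" unfolding beq_def r A B C by simp
  have rho: "rhoq ?U0 ?U1 ?U2 ?U3 \<noteq> 0" unfolding rhoq_def al be A B C by simp
  have W: "Wd (hess ?U0) (pluecker ?U0 ?U1) 0 1 2 = 144" unfolding Wd_def hus unfolding usv by (simp add: pluecker_def)
  show ?thesis unfolding F2_def N A B C W using rho by simp
qed

lemma part2: "\<exists>F \<in> polyfun. (\<exists>u. (\<forall>j<4. frame_vec u j \<in> quartics) \<and> F u \<noteq> 0) \<and>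
           (\<forall>u. (\<forall>j<4. frame_vec u j \<in> quartics) \<and>
                lindep_free [frame_vec u 0, frame_vec u 1, frame_vec u 2, frame_vec u 3] \<and>
                F u \<noteq> 0 \<longrightarrow>
              card (H3 \<inter> Omega13 (frame_vec u 0) (frame_vec u 1) (frame_vec u 2) (frame_vec u 3)) = 2)"
proof (intro bexI[OF _ pf_F2] conjI allI impI)
  show "\<exists>u. (\<forall>j<4. frame_vec u j \<in> quartics) \<and> F2 u \<noteq> 0" using usq F2_us by blast
next
  fix u assume h: "(\<forall>j<4. frame_vec u j \<in> quartics) \<and>
                lindep_free [frame_vec u 0, frame_vec u 1, frame_vec u 2, frame_vec u 3] \<and> F2 u \<noteq> 0"
  then have q: "frame_vec u 0 \<in> quartics" "frame_vec u 1 \<in> quartics" "frame_vec u 2 \<in> quartics" "frame_vec u 3 \<in> quartics"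
    by auto
  have F: "F2 u \<noteq> 0" using h by blast
  then show "card (H3 \<inter> Omega13 (frame_vec u 0) (frame_vec u 1) (frame_vec u 2) (frame_vec u 3)) = 2"
    unfolding F2_def by (intro count2[OF q]) auto
qed


theorem mainTheorem6:
  shows "(\<exists>F \<in> polyfun. (\<exists>p \<in> quartics. F p \<noteq> 0) \<and>
           (\<forall>p \<in> quartics. p \<noteq> (\<lambda>i. 0) \<and> F p \<noteq> 0 \<longrightarrow>
              card (H3 \<inter> Omega04 p) = 1))
       \<and> (\<exists>F \<in> polyfun. (\<exists>u. (\<forall>j<4. frame_vec u j \<in> quartics) \<and> F u \<noteq> 0) \<and>
           (\<forall>u. (\<forall>j<4. frame_vec u j \<in> quartics) \<and>
                lindep_free [frame_vec u 0, frame_vec u 1, frame_vec u 2, frame_vec u 3] \<and>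
                F u \<noteq> 0 \<longrightarrow>
              card (H3 \<inter> Omega13 (frame_vec u 0) (frame_vec u 1) (frame_vec u 2) (frame_vec u 3)) = 2))"
    using part1 part2 by (rule conjI)

end
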